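(* Let $m\ge 0$, $n=3m+2$, and $t\ge 1$. Then there is a homotopy equivalence $I(G_{n,t})\simeq I(G_{n,t}\setminus a_{t-1})$.
   Context: For a finite simple graph $G$, $I(G)$ is its independence complex (simplicial complex on $V(G)$ whose simplices are the independent sets); $G\setminus v$ is the induced subgraph on $V(G)\setminus\{v\}$. For integers $n\ge 2$, $t\ge 0$, the graph $G_{n,t}$ has vertex set $\{a_0,\dots,a_t\}\cup\{b_{i,j},c_{i,j}: 1\le i\le t,\ 1\le j\le n-1\}$, and its edges are exactly: $b_{i,j}\sim b_{i,j+1}$ and $c_{i,j}\sim c_{i,j+1}$ for $1\le i\le t$, $1\le j\le n-2$; $b_{i,n-1}\sim b_{i+1,1}$ and $c_{i,n-1}\sim c_{i+1,1}$ for $1\le i\le t-1$; and $a_{i-1}\sim b_{i,1}$, $a_{i-1}\sim c_{i,1}$, $a_i\sim b_{i,n-1}$, $a_i\sim c_{i,n-1}$ for $1\le i\le t$. *)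

theory Defs
  imports "HOL-Analysis.Analysis"
begin

text \<open>Finite simple graphs are given as a pair (vertex set, symmetric edge relation).\<close>
type_synonym 'a graph = "'a set \<times> ('a \<Rightarrow> 'a \<Rightarrow> bool)"

definition indep_complex :: "'a graph \<Rightarrow> 'a set set" where
  "indep_complex G = {S. S \<subseteq> fst G \<and> (\<forall>x\<in>S. \<forall>y\<in>S. \<not> snd G x y)}"

definition delete_vertex :: "'a graph \<Rightarrow> 'a \<Rightarrow> 'a graph" where
  "delete_vertex G v = (fst G - {v}, \<lambda>x y. x \<noteq> v \<and> y \<noteq> v \<and> snd G x y)"

definition geom_realization :: "'a set \<Rightarrow> 'a set set \<Rightarrow> ('a \<Rightarrow> real) topology" where
  "geom_realization V K = subtopology (powertop_real V)
     {f. f \<in> extensional V \<and> (\<forall>v\<in>V. 0 \<le> f v) \<and> {v\<in>V. f v \<noteq> 0} \<in> K \<and> sum f V = 1}"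

definition indep_space :: "'a graph \<Rightarrow> ('a \<Rightarrow> real) topology" where
  "indep_space G = geom_realization (fst G) (indep_complex G)"

datatype vert = A nat | B nat nat | C nat nat

definition Gverts :: "nat \<Rightarrow> nat \<Rightarrow> vert set" where
  "Gverts n t = {A i | i. i \<le> t}
     \<union> {B i j | i j. 1 \<le> i \<and> i \<le> t \<and> 1 \<le> j \<and> j \<le> n - 1}
     \<union> {C i j | i j. 1 \<le> i \<and> i \<le> t \<and> 1 \<le> j \<and> j \<le> n - 1}"

text \<open>The listed edges (one orientation each).\<close>
definition Gedge0 :: "nat \<Rightarrow> nat \<Rightarrow> vert \<Rightarrow> vert \<Rightarrow> bool" where
  "Gedge0 n t x y \<longleftrightarrow>
     (\<exists>i j. 1 \<le> i \<and> i \<le> t \<and> 1 \<le> j \<and> j \<le> n - 2 \<and>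
        ((x = B i j \<and> y = B i (j+1)) \<or> (x = C i j \<and> y = C i (j+1)))) \<or>
     (\<exists>i. 1 \<le> i \<and> i \<le> t - 1 \<and>
        ((x = B i (n-1) \<and> y = B (i+1) 1) \<or> (x = C i (n-1) \<and> y = C (i+1) 1))) \<or>
     (\<exists>i. 1 \<le> i \<and> i \<le> t \<and>
        ((x = A (i-1) \<and> y = B i 1) \<or> (x = A (i-1) \<and> y = C i 1) \<or>
         (x = A i \<and> y = B i (n-1)) \<or> (x = A i \<and> y = C i (n-1))))"

definition G :: "nat \<Rightarrow> nat \<Rightarrow> vert graph" where
  "G n t = (Gverts n t, \<lambda>x y. Gedge0 n t x y \<or> Gedge0 n t y x)"

end

theory Submission
  imports Defs
begin


definition indep :: "('a \<Rightarrow> 'a \<Rightarrow> bool) \<Rightarrow> 'a set \<Rightarrow> bool" where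
  "indep E S \<longleftrightarrow> (\<forall>x\<in>S. \<forall>y\<in>S. \<not> E x y)"

definition supp :: "'a set \<Rightarrow> ('a \<Rightarrow> real) \<Rightarrow> 'a set" where
  "supp U f = {x\<in>U. f x \<noteq> 0}"

definition pt :: "'a set \<Rightarrow> ('a \<Rightarrow> real) \<Rightarrow> bool" where
  "pt U f \<longleftrightarrow> f \<in> extensional U \<and> (\<forall>x\<in>U. 0 \<le> f x) \<and> sum f U = 1"

definition Rset :: "'a set \<Rightarrow> 'a set \<Rightarrow> ('a \<Rightarrow> 'a \<Rightarrow> bool) \<Rightarrow> ('a \<Rightarrow> real) set" where
  "Rset U W E = {f. pt U f \<and> supp U f \<subseteq> W \<and> indep E (supp U f)}"

definition Rsp :: "'a set \<Rightarrow> 'a set \<Rightarrow> ('a \<Rightarrow> 'a \<Rightarrow> bool) \<Rightarrow> ('a \<Rightarrow> real) topology" where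
  "Rsp U W E = subtopology (powertop_real U) (Rset U W E)"

definition lin :: "'a set \<Rightarrow> real \<Rightarrow> ('a \<Rightarrow> real) \<Rightarrow> ('a \<Rightarrow> real) \<Rightarrow> ('a \<Rightarrow> real)" where
  "lin U a f g = restrict (\<lambda>u. (1 - a) * f u + a * g u) U"

lemma indep_subset: "indep E S \<Longrightarrow> T \<subseteq> S \<Longrightarrow> indep E T"
  unfolding indep_def by blast

lemma Rset_sub_ext: "Rset U W E \<subseteq> extensional U"
  by (auto simp: Rset_def pt_def)

lemma topspace_Rsp [simp]: "topspace (Rsp U W E) = Rset U W E"
  using Rset_sub_ext[of U W E] unfolding Rsp_def topspace_subtopology topspace_product_topology_alt by auto

lemma indep_space_Rsp: "indep_space H = Rsp (fst H) (fst H) (snd H)"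
proof -
  have "{f. f \<in> extensional (fst H) \<and> (\<forall>v\<in>fst H. 0 \<le> f v) \<and> {v\<in>fst H. f v \<noteq> 0} \<in> indep_complex H \<and> sum f (fst H) = 1}
        = Rset (fst H) (fst H) (snd H)"
    by (auto simp: Rset_def pt_def supp_def indep_complex_def indep_def)
  then show ?thesis
    by (simp add: indep_space_def geom_realization_def Rsp_def)
qed

lemma cont_coord: "u \<in> U \<Longrightarrow> continuous_map (Rsp U W E) euclideanreal (\<lambda>x. x u)"
  unfolding Rsp_def by (intro continuous_map_from_subtopology continuous_map_product_projection)

lemma cont_into_Rsp:
  assumes "\<And>u. u \<in> U \<Longrightarrow> continuous_map T euclideanreal (\<lambda>z. g z u)"
    and "\<And>z. z \<in> topspace T \<Longrightarrow> g z \<in> Rset U W E"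
  shows "continuous_map T (Rsp U W E) g"
  unfolding Rsp_def
proof (rule continuous_map_into_subtopology)
  show "continuous_map T (powertop_real U) g"
    unfolding continuous_map_componentwise using assms Rset_sub_ext by blast
  show "g \<in> topspace T \<rightarrow> Rset U W E" using assms by blast
qed

lemma lin_apply: "u \<in> U \<Longrightarrow> lin U a f g u = (1 - a) * f u + a * g u"
  by (simp add: lin_def)

lemma lin0: "f \<in> extensional U \<Longrightarrow> lin U 0 f g = f"
  by (auto simp: lin_def extensional_def restrict_def)

lemma lin1: "g \<in> extensional U \<Longrightarrow> lin U 1 f g = g"
  by (auto simp: lin_def extensional_def restrict_def)

lemma lin_pt:
  assumes "finite U" "pt U f" "pt U g" "0 \<le> a" "a \<le> 1"
  shows "pt U (lin U a f g)" "supp U (lin U a f g) \<subseteq> supp U f \<union> supp U g"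
proof -
  have "sum (lin U a f g) U = sum (\<lambda>u. (1 - a) * f u + a * g u) U"
    by (rule sum.cong) (auto simp: lin_apply)
  also have "\<dots> = (1 - a) * sum f U + a * sum g U"
    by (simp add: sum.distrib sum_distrib_left)
  also have "\<dots> = 1" using assms by (simp add: pt_def)
  finally show "pt U (lin U a f g)"
    using assms by (auto simp: pt_def lin_def)
  show "supp U (lin U a f g) \<subseteq> supp U f \<union> supp U g"
    by (auto simp: supp_def lin_apply)
qed

lemma Rset_I: "pt U f \<Longrightarrow> supp U f \<subseteq> S \<Longrightarrow> S \<subseteq> W \<Longrightarrow> indep E S \<Longrightarrow> f \<in> Rset U W E"
  by (auto simp: Rset_def intro: indep_subset)

lemma lin_Rset:
  assumes "finite U" "f \<in> Rset U W1 E" "g \<in> Rset U W2 E" "0 \<le> a" "a \<le> 1"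
    "supp U f \<union> supp U g \<subseteq> W" "indep E (supp U f \<union> supp U g)"
  shows "lin U a f g \<in> Rset U W E"
  using lin_pt[OF assms(1) _ _ assms(4,5), of f g] assms
  by (intro Rset_I[of _ _ "supp U f \<union> supp U g"]) (auto simp: Rset_def)

lemma cont_lin:
  assumes "continuous_map T euclideanreal a"
    "\<And>u. u \<in> U \<Longrightarrow> continuous_map T euclideanreal (\<lambda>z. f z u)"
    "\<And>u. u \<in> U \<Longrightarrow> continuous_map T euclideanreal (\<lambda>z. g z u)"
    "u \<in> U"
  shows "continuous_map T euclideanreal (\<lambda>z. lin U (a z) (f z) (g z) u)"
  using assms by (simp add: lin_apply) (intro continuous_intros; simp)



lemma paste3:
  assumes s: "continuous_map Z euclideanreal s" and ab: "a \<le> b"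
   and f: "continuous_map (subtopology Z {z. s z \<le> a}) Y f"
   and g: "continuous_map (subtopology Z {z. a \<le> s z \<and> s z \<le> b}) Y g"
   and h: "continuous_map (subtopology Z {z. b \<le> s z}) Y h"
   and fg: "\<And>z. z \<in> topspace Z \<Longrightarrow> s z = a \<Longrightarrow> f z = g z"
   and gh: "\<And>z. z \<in> topspace Z \<Longrightarrow> s z = b \<Longrightarrow> g z = h z"
  shows "continuous_map Z Y (\<lambda>z. if s z \<le> a then f z else if s z \<le> b then g z else h z)"
proof (rule continuous_map_cases_le[where q="\<lambda>_. a"])
  show "continuous_map Z euclideanreal s" by (rule s)
  show "continuous_map Z euclideanreal (\<lambda>_. a)" by simp
  show "continuous_map (subtopology Z {x \<in> topspace Z. s x \<le> a}) Y f"
    by (rule continuous_map_from_subtopology_mono[OF f]) auto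
  let ?Z' = "subtopology Z {x \<in> topspace Z. a \<le> s x}"
  show "continuous_map ?Z' Y (\<lambda>z. if s z \<le> b then g z else h z)"
  proof (rule continuous_map_cases_le[where q="\<lambda>_. b"])
    show "continuous_map ?Z' euclideanreal s"
      by (rule continuous_map_from_subtopology[OF s])
    show "continuous_map ?Z' euclideanreal (\<lambda>_. b)" by simp
    show "continuous_map (subtopology ?Z' {x \<in> topspace ?Z'. s x \<le> b}) Y g"
      unfolding subtopology_subtopology
      by (rule continuous_map_from_subtopology_mono[OF g]) auto
    show "continuous_map (subtopology ?Z' {x \<in> topspace ?Z'. b \<le> s x}) Y h"
      unfolding subtopology_subtopology
      by (rule continuous_map_from_subtopology_mono[OF h]) auto
    show "\<And>x. x \<in> topspace ?Z' \<Longrightarrow> s x = b \<Longrightarrow> g x = h x" using gh by auto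
  qed
  show "\<And>x. x \<in> topspace Z \<Longrightarrow> s x = a \<Longrightarrow> f x = (if s x \<le> b then g x else h x)"
    using fg ab by auto
qed

lemma kcomp:
  assumes kc: "continuous_map (prod_topology (top_of_set {0..1}) L) L k"
    and a: "continuous_map T euclideanreal a" "\<And>z. z \<in> topspace T \<Longrightarrow> a z \<in> {0..1}"
    and y: "continuous_map T L y"
  shows "continuous_map T L (\<lambda>z. k (a z, y z))"
proof -
  have "continuous_map T (top_of_set {0..1}) a"
    using a by (auto intro: continuous_map_into_subtopology)
  then have "continuous_map T (prod_topology (top_of_set {0..1}) L) (\<lambda>z. (a z, y z))"
    using y by (intro continuous_map_pairedI)
  from continuous_map_compose[OF this kc] show ?thesis by (simp add: o_def)
qed

lemma Rsp_narrow:
  assumes "continuous_map T (Rsp U W E) f" "\<And>z. z \<in> topspace T \<Longrightarrow> f z \<in> Rset U W' E"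
  shows "continuous_map T (Rsp U W' E) f"
  using assms unfolding Rsp_def continuous_map_in_subtopology by blast

lemma Rset_mono: "W1 \<subseteq> W2 \<Longrightarrow> Rset U W1 E \<subseteq> Rset U W2 E"
  by (auto simp: Rset_def)

lemma Rsp_incl: "W1 \<subseteq> W2 \<Longrightarrow> continuous_map (Rsp U W1 E) (Rsp U W2 E) id"
  unfolding Rsp_def continuous_map_in_subtopology
  using Rset_mono[of W1 W2 U E]
  by (auto intro: continuous_map_from_subtopology)

lemma Rset_le1:
  assumes "finite U" "x \<in> Rset U W E" "u \<in> U"
  shows "0 \<le> x u" "x u \<le> 1"
proof -
  show "0 \<le> x u" using assms by (auto simp: Rset_def pt_def)
  have "x u \<le> sum x U"
    using assms by (intro member_le_sum) (auto simp: Rset_def pt_def)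
  then show "x u \<le> 1" using assms by (auto simp: Rset_def pt_def)
qed

lemma Rset_ext: "x \<in> Rset U W E \<Longrightarrow> x \<in> extensional U"
  by (auto simp: Rset_def pt_def)



definition lk :: "'a set \<Rightarrow> ('a \<Rightarrow> 'a \<Rightarrow> bool) \<Rightarrow> 'a \<Rightarrow> 'a set" where
  "lk W E v = {x\<in>W. x \<noteq> v \<and> \<not> E v x \<and> \<not> E x v}"

definition cf :: "real \<Rightarrow> real" where "cf x = max 0 (1 - 3 * x)"
definition phf :: "real \<Rightarrow> real" where "phf x = 1 - (1 - x) * cf x"
definition psf :: "real \<Rightarrow> real" where "psf x = min 1 (max 0 (9 * x - 1))"

lemma cf_props: "0 \<le> cf s" "0 \<le> s \<Longrightarrow> cf s \<le> 1"
  by (auto simp: cf_def)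

lemma phf_props: "0 \<le> s \<Longrightarrow> s \<le> 1 \<Longrightarrow> 0 \<le> phf s" "0 \<le> s \<Longrightarrow> s \<le> 1 \<Longrightarrow> phf s \<le> 1"
  "phf 0 = 0" "1/3 \<le> s \<Longrightarrow> phf s = 1"
  "0 \<le> s \<Longrightarrow> s \<le> 1 \<Longrightarrow> phf s = 0 \<Longrightarrow> s = 0"
proof -
  assume "0 \<le> s" "s \<le> 1"
  then have "(1 - s) * cf s \<le> 1 * 1" "0 \<le> (1 - s) * cf s"
    by (intro mult_mono mult_nonneg_nonneg; auto simp: cf_def)+
  then show "0 \<le> phf s" "phf s \<le> 1" by (auto simp: phf_def)
next
  show "phf 0 = 0" by (simp add: phf_def cf_def)
  show "1/3 \<le> s \<Longrightarrow> phf s = 1" by (simp add: phf_def cf_def)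
next
  assume a: "0 \<le> s" "s \<le> 1" "phf s = 0"
  show "s = 0"
  proof (rule ccontr)
    assume "s \<noteq> 0"
    then have "0 < s" using a by auto
    have "cf s \<le> 1" using a by (auto simp: cf_def)
    have "(1 - s) * cf s \<le> (1 - s) * 1" using \<open>cf s \<le> 1\<close> a by (intro mult_left_mono) auto
    then show False using a \<open>0 < s\<close> by (auto simp: phf_def)
  qed
qed

lemma psf_props: "0 \<le> psf s" "psf s \<le> 1" "s \<le> 1/9 \<Longrightarrow> psf s = 0" "2/9 \<le> s \<Longrightarrow> psf s = 1"
  by (auto simp: psf_def)

locale cone =
  fixes U W :: "'a set" and E :: "'a \<Rightarrow> 'a \<Rightarrow> bool" and v :: 'a
    and k :: "real \<times> ('a \<Rightarrow> real) \<Rightarrow> ('a \<Rightarrow> real)" and p :: "'a \<Rightarrow> real"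
  assumes fin: "finite U" and WU: "W \<subseteq> U" and vW: "v \<in> W" and irr: "\<not> E v v"
    and kc: "continuous_map (prod_topology (top_of_set {0..1}) (Rsp U (lk W E v) E)) (Rsp U (lk W E v) E) k"
    and k0: "\<And>y. y \<in> Rset U (lk W E v) E \<Longrightarrow> k (0, y) = y"
    and k1: "\<And>y. y \<in> Rset U (lk W E v) E \<Longrightarrow> k (1, y) = p"
    and pin: "p \<in> Rset U (lk W E v) E"
begin

abbreviation "W0 \<equiv> lk W E v"

definition ev :: "'a \<Rightarrow> real" where "ev = restrict (\<lambda>u. if u = v then 1 else 0) U"
definition yv :: "('a \<Rightarrow> real) \<Rightarrow> ('a \<Rightarrow> real)" where
  "yv x = restrict (\<lambda>u. if u = v then 0 else x u / (1 - x v)) U"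
definition PP :: "('a \<Rightarrow> real) \<Rightarrow> ('a \<Rightarrow> real)" where
  "PP x = restrict (\<lambda>u. if u = v then phf (x v) else cf (x v) * x u) U"

lemma vU: "v \<in> U" using vW WU by auto

lemma ev_in: "ev \<in> Rset U W E"
proof -
  have "sum ev U = 1"
    using fin vU by (simp add: ev_def sum.If_cases)
  moreover have "supp U ev = {v}" using vU by (auto simp: supp_def ev_def)
  ultimately show ?thesis using vW irr by (auto simp: Rset_def pt_def ev_def indep_def)
qed

lemma supp_ev: "supp U ev = {v}" using vU by (auto simp: supp_def ev_def)

lemma W0_sub: "W0 \<subseteq> W - {v}" by (auto simp: lk_def)

lemma lin_cone:
  assumes "z \<in> Rset U W0 E" "0 \<le> a" "a \<le> 1"
  shows "lin U a z ev \<in> Rset U W E"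
proof (rule lin_Rset[OF fin assms(1) ev_in assms(2,3)])
  have "supp U z \<subseteq> W0" using assms by (auto simp: Rset_def)
  then show "supp U z \<union> supp U ev \<subseteq> W" using vW by (auto simp: supp_ev lk_def)
  have "indep E (supp U z)" using assms by (auto simp: Rset_def)
  then show "indep E (supp U z \<union> supp U ev)"
    using \<open>supp U z \<subseteq> W0\<close> irr by (auto simp: supp_ev indep_def lk_def)
qed

lemma yv_apply: "u \<in> U \<Longrightarrow> yv x u = (if u = v then 0 else x u / (1 - x v))"
  by (simp add: yv_def)

lemma yv_L:
  assumes x: "x \<in> Rset U W E" and s: "0 < x v" "x v < 1"
  shows "yv x \<in> Rset U W0 E"
proof -
  have sx: "supp U x \<subseteq> W" "indep E (supp U x)" and ptx: "pt U x" using x by (auto simp: Rset_def)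
  have vs: "v \<in> supp U x" using s vU by (auto simp: supp_def)
  have ssub: "supp U (yv x) = supp U x - {v}"
    using s by (auto simp: supp_def yv_apply split: if_splits)
  have "supp U (yv x) \<subseteq> W0"
    using sx vs unfolding ssub lk_def indep_def by auto
  moreover have "indep E (supp U (yv x))" using sx(2) ssub by (auto intro: indep_subset)
  moreover have "pt U (yv x)"
  proof -
    have "sum (yv x) U = sum (\<lambda>u. if u = v then 0 else x u / (1 - x v)) U"
      by (rule sum.cong) (auto simp: yv_apply)
    also have "\<dots> = sum (\<lambda>u. x u / (1 - x v)) (U - {v})"
      using fin vU by (simp add: sum.If_cases Diff_eq)
    also have "\<dots> = (sum x U - x v) / (1 - x v)"
      using fin vU by (simp add: sum_divide_distrib[symmetric] sum_diff1 diff_divide_distrib)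
    also have "\<dots> = 1" using ptx s by (simp add: pt_def)
    finally show ?thesis
      using ptx s by (auto simp: pt_def yv_def)
  qed
  ultimately show ?thesis by (auto simp: Rset_def)
qed

lemma yv_0:
  assumes x: "x \<in> Rset U W E" and s: "x v = 0"
  shows "yv x = x"
  using Rset_ext[OF x] s by (auto simp: yv_def restrict_def extensional_def)

lemma x_v0_Y: "x \<in> Rset U W E \<Longrightarrow> x v = 0 \<Longrightarrow> x \<in> Rset U (W - {v}) E"
  by (auto simp: Rset_def supp_def)

lemma Y_v0: "x \<in> Rset U (W - {v}) E \<Longrightarrow> x v = 0"
  using vU by (auto simp: Rset_def supp_def)

lemma PP_in:
  assumes x: "x \<in> Rset U W E"
  shows "PP x \<in> Rset U W E" "supp U (PP x) \<subseteq> supp U x"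
proof -
  have s: "0 \<le> x v" "x v \<le> 1" using Rset_le1[OF fin x vU] by auto
  have ptx: "pt U x" using x by (auto simp: Rset_def)
  show sp: "supp U (PP x) \<subseteq> supp U x"
    using phf_props(3) by (auto simp: supp_def PP_def)
  have "sum (PP x) U = sum (\<lambda>u. if u = v then phf (x v) else cf (x v) * x u) U"
    by (rule sum.cong) (auto simp: PP_def)
  also have "\<dots> = phf (x v) + cf (x v) * (sum x U - x v)"
    using fin vU by (simp add: sum.If_cases Diff_eq sum_distrib_left[symmetric] sum_diff1 flip: Diff_eq)
  also have "\<dots> = 1" using ptx by (simp add: pt_def phf_def algebra_simps)
  finally have "sum (PP x) U = 1" .
  moreover have "\<forall>u\<in>U. 0 \<le> PP x u"
    using phf_props(1)[OF s] cf_props(1) ptx by (auto simp: PP_def pt_def)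
  ultimately have "pt U (PP x)" by (auto simp: pt_def PP_def)
  then show "PP x \<in> Rset U W E"
    using x sp by (auto simp: Rset_def intro: indep_subset)
qed


abbreviation "X \<equiv> Rsp U W E"
abbreviation "Y \<equiv> Rsp U (W - {v}) E"
abbreviation "L \<equiv> Rsp U W0 E"
abbreviation "Z \<equiv> prod_topology (top_of_set {0..1::real}) X"

lemma topZ: "topspace Z = {0..1} \<times> Rset U W E" by simp

lemma cZt: "continuous_map Z euclideanreal fst"
  using continuous_map_fst[of "top_of_set {0..1::real}" X] continuous_map_in_subtopology by blast

lemma cZx: "u \<in> U \<Longrightarrow> continuous_map Z euclideanreal (\<lambda>z. snd z u)"
  using continuous_map_compose[OF continuous_map_snd cont_coord[of u U W E]] by (simp add: o_def)

lemma cyv_coord: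
  assumes "\<And>u. u \<in> U \<Longrightarrow> continuous_map T euclideanreal (\<lambda>z. xf z u)"
    and "\<And>z. z \<in> topspace T \<Longrightarrow> xf z v \<le> 1/3" and u: "u \<in> U"
  shows "continuous_map T euclideanreal (\<lambda>z. yv (xf z) u)"
proof (cases "u = v")
  case True then show ?thesis using u by (simp add: yv_apply)
next
  case False
  have "continuous_map T euclideanreal (\<lambda>z. xf z u / (1 - xf z v))"
    using assms vU by (intro continuous_intros) force+
  then show ?thesis using u False by (simp add: yv_apply)
qed

lemma cyv_L:
  assumes "\<And>u. u \<in> U \<Longrightarrow> continuous_map T euclideanreal (\<lambda>z. xf z u)"
    and "\<And>z. z \<in> topspace T \<Longrightarrow> xf z \<in> Rset U W E \<and> 1/9 \<le> xf z v \<and> xf z v \<le> 1/3"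
  shows "continuous_map T L (\<lambda>z. yv (xf z))"
proof (rule cont_into_Rsp)
  show "\<And>u. u \<in> U \<Longrightarrow> continuous_map T euclideanreal (\<lambda>z. yv (xf z) u)"
    using assms by (intro cyv_coord) force+
  show "\<And>z. z \<in> topspace T \<Longrightarrow> yv (xf z) \<in> Rset U W0 E"
    using assms by (intro yv_L) force+
qed

lemma mem1:
  assumes x: "x \<in> Rset U W E" and "x v \<le> 1/3" "0 \<le> a" "a \<le> 1" "x v = 0 \<Longrightarrow> a = 0"
  shows "lin U a (yv x) ev \<in> Rset U W E"
proof (cases "x v = 0")
  case True
  then show ?thesis using assms yv_0[OF x] lin0[OF Rset_ext[OF x]] by simp
next
  case False
  then have "0 < x v" using Rset_le1[OF fin x vU] by auto
  then show ?thesis using assms by (intro lin_cone yv_L) auto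
qed

lemma cphf: "continuous_map T euclideanreal g \<Longrightarrow> continuous_map T euclideanreal (\<lambda>z. phf (g z))"
  unfolding phf_def cf_def by (intro continuous_intros)

lemma cpsf: "continuous_map T euclideanreal g \<Longrightarrow> continuous_map T euclideanreal (\<lambda>z. psf (g z))"
  unfolding psf_def by (intro continuous_intros)

lemma cev: "u \<in> U \<Longrightarrow> continuous_map T euclideanreal (\<lambda>z. ev u)"
  by simp

lemma cL_coord: "continuous_map T L g \<Longrightarrow> u \<in> U \<Longrightarrow> continuous_map T euclideanreal (\<lambda>z. g z u)"
  using continuous_map_compose[of T L g euclideanreal "\<lambda>x. x u"] cont_coord[of u U W0 E]
  by (simp add: o_def)

lemma cL_mem: "continuous_map T L g \<Longrightarrow> z \<in> topspace T \<Longrightarrow> g z \<in> Rset U W0 E"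
  using continuous_map_image_subset_topspace[of T L g] by auto


lemma cont_lin_Rsp:
  assumes "continuous_map T euclideanreal a"
    "\<And>u. u \<in> U \<Longrightarrow> continuous_map T euclideanreal (\<lambda>z. f z u)"
    "\<And>u. u \<in> U \<Longrightarrow> continuous_map T euclideanreal (\<lambda>z. g z u)"
    "\<And>z. z \<in> topspace T \<Longrightarrow> lin U (a z) (f z) (g z) \<in> Rset U W' E"
  shows "continuous_map T (Rsp U W' E) (\<lambda>z. lin U (a z) (f z) (g z))"
  using assms by (intro cont_into_Rsp cont_lin) auto

lemma PP_apply: "u \<in> U \<Longrightarrow> PP x u = (if u = v then phf (x v) else cf (x v) * x u)"
  by (simp add: PP_def)

lemma ev_apply: "u \<in> U \<Longrightarrow> ev u = (if u = v then 1 else 0)"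
  by (simp add: ev_def)

lemma ev_ext: "ev \<in> extensional U" by (simp add: ev_def)

lemma lin_yv_PP:
  assumes "x v \<le> 1/3"
  shows "lin U (phf (x v)) (yv x) ev = PP x"
proof (rule ext)
  fix u
  show "lin U (phf (x v)) (yv x) ev u = PP x u"
  proof (cases "u \<in> U")
    case True
    have ne: "1 - x v \<noteq> 0" using assms by auto
    show ?thesis using True ne
      by (auto simp: lin_apply yv_apply PP_apply ev_apply phf_def field_simps)
  next
    case False then show ?thesis by (simp add: lin_def PP_def)
  qed
qed

lemma PP_big: "1/3 \<le> x v \<Longrightarrow> PP x = ev"
  by (auto simp: PP_def ev_def phf_def cf_def restrict_def fun_eq_iff)

lemma HA_hom: "homotopic_with (\<lambda>x. True) X X id PP"
proof -
  let ?h = "\<lambda>z. lin U (fst z) (snd z) (PP (snd z))"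
  have "continuous_map Z X ?h"
  proof (rule cont_lin_Rsp)
    show "continuous_map Z euclideanreal fst" by (rule cZt)
    show "\<And>u. u \<in> U \<Longrightarrow> continuous_map Z euclideanreal (\<lambda>z. snd z u)" by (rule cZx)
    show "continuous_map Z euclideanreal (\<lambda>z. PP (snd z) u)" if "u \<in> U" for u
    proof (cases "u = v")
      case True
      then show ?thesis using that vU by (simp add: PP_apply) (intro cphf cZx)
    next
      case False
      then show ?thesis using that vU
        by (simp add: PP_apply cf_def) (intro continuous_intros cZx)
    qed
    show "?h z \<in> Rset U W E" if "z \<in> topspace Z" for z
    proof -
      obtain t x where z0: "z = (t, x)" by (cases z)
      then have z: "z = (t, x)" "t \<in> {0..1}" "x \<in> Rset U W E" using that by auto
      have "supp U x \<union> supp U (PP x) \<subseteq> supp U x" using PP_in[OF z(3)] by auto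
      then show ?thesis using z PP_in[OF z(3)]
        by (intro lin_Rset[OF fin, of _ W _ _ W]) (auto simp: Rset_def intro: indep_subset)
    qed
  qed
  moreover have "\<forall>x\<in>topspace X. ?h (0, x) = id x"
    by (auto intro: lin0 Rset_ext)
  moreover have "\<forall>x\<in>topspace X. ?h (1, x) = PP x"
    by (auto intro: lin1 simp: PP_def)
  ultimately show ?thesis by (subst homotopic_with) (auto intro!: exI[of _ ?h])
qed


definition HB1 :: "real \<times> ('a \<Rightarrow> real) \<Rightarrow> ('a \<Rightarrow> real)" where
  "HB1 z = (if snd z v \<le> 1/9 then lin U (phf (snd z v)) (yv (snd z)) ev
            else if snd z v \<le> 1/3 then lin U (phf (snd z v)) (k (fst z * psf (snd z v), yv (snd z))) ev
            else ev)"

lemma cZs: "continuous_map Z euclideanreal (\<lambda>z. snd z v)" using cZx vU by blast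

lemma sub_coords: "u \<in> U \<Longrightarrow> continuous_map (subtopology Z S) euclideanreal (\<lambda>z. snd z u)"
  by (rule continuous_map_from_subtopology[OF cZx])

lemma sub_t: "continuous_map (subtopology Z S) euclideanreal fst"
  by (rule continuous_map_from_subtopology[OF cZt])

lemma sub_s: "continuous_map (subtopology Z S) euclideanreal (\<lambda>z. snd z v)"
  by (rule continuous_map_from_subtopology[OF cZs])

lemma region1_cont:
  assumes "continuous_map (subtopology Z {z. snd z v \<le> 1/9}) euclideanreal a"
    "\<And>z. z \<in> topspace Z \<Longrightarrow> snd z v \<le> 1/9 \<Longrightarrow> 0 \<le> a z \<and> a z \<le> 1 \<and> (snd z v = 0 \<longrightarrow> a z = 0)"
  shows "continuous_map (subtopology Z {z. snd z v \<le> 1/9}) X (\<lambda>z. lin U (a z) (yv (snd z)) ev)"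
proof (rule cont_lin_Rsp[OF assms(1)])
  show "\<And>u. u \<in> U \<Longrightarrow> continuous_map (subtopology Z {z. snd z v \<le> 1/9}) euclideanreal (\<lambda>z. yv (snd z) u)"
    by (rule cyv_coord[OF sub_coords]) auto
  show "\<And>u. u \<in> U \<Longrightarrow> continuous_map (subtopology Z {z. snd z v \<le> 1/9}) euclideanreal (\<lambda>z. ev u)"
    by simp
  show "lin U (a z) (yv (snd z)) ev \<in> Rset U W E" if "z \<in> topspace (subtopology Z {z. snd z v \<le> 1/9})" for z
    using that assms(2)[of z] by (intro mem1) auto
qed

lemma yvk_cont:
  assumes "continuous_map (subtopology Z S) euclideanreal a"
    "\<And>z. z \<in> topspace Z \<Longrightarrow> z \<in> S \<Longrightarrow> 0 \<le> a z \<and> a z \<le> 1"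
    "\<And>z. z \<in> topspace Z \<Longrightarrow> z \<in> S \<Longrightarrow> 1/9 \<le> snd z v \<and> snd z v \<le> 1/3"
  shows "continuous_map (subtopology Z S) L (\<lambda>z. k (a z, yv (snd z)))"
proof (rule kcomp[OF kc assms(1)])
  show "\<And>z. z \<in> topspace (subtopology Z S) \<Longrightarrow> a z \<in> {0..1}" using assms(2) by auto
  show "continuous_map (subtopology Z S) L (\<lambda>z. yv (snd z))"
    by (rule cyv_L[OF sub_coords]) (use assms(3) in auto)
qed

lemma region_k_cont:
  assumes "continuous_map (subtopology Z S) euclideanreal a"
    "\<And>z. z \<in> topspace Z \<Longrightarrow> z \<in> S \<Longrightarrow> 0 \<le> a z \<and> a z \<le> 1"
    "continuous_map (subtopology Z S) L g"
  shows "continuous_map (subtopology Z S) X (\<lambda>z. lin U (a z) (g z) ev)"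
proof (rule cont_lin_Rsp[OF assms(1)])
  show "\<And>u. u \<in> U \<Longrightarrow> continuous_map (subtopology Z S) euclideanreal (\<lambda>z. g z u)"
    by (rule cL_coord[OF assms(3)])
  show "\<And>u. u \<in> U \<Longrightarrow> continuous_map (subtopology Z S) euclideanreal (\<lambda>z. ev u)"
    by simp
  show "lin U (a z) (g z) ev \<in> Rset U W E" if "z \<in> topspace (subtopology Z S)" for z
    using that assms(2)[of z] cL_mem[OF assms(3) that] by (intro lin_cone) auto
qed

lemma s_range: "z \<in> topspace Z \<Longrightarrow> 0 \<le> snd z v \<and> snd z v \<le> 1"
  using Rset_le1[OF fin _ vU] by auto

lemma HB1_cont: "continuous_map Z X HB1"
  unfolding HB1_def
proof (rule paste3[OF cZs])
  show "(1/9::real) \<le> 1/3" by simp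
  show "continuous_map (subtopology Z {z. snd z v \<le> 1/9}) X (\<lambda>z. lin U (phf (snd z v)) (yv (snd z)) ev)"
  proof (rule region1_cont[OF cphf[OF sub_s]])
    fix z assume "z \<in> topspace Z" "snd z v \<le> 1/9"
    then show "0 \<le> phf (snd z v) \<and> phf (snd z v) \<le> 1 \<and> (snd z v = 0 \<longrightarrow> phf (snd z v) = 0)"
      using s_range[of z] phf_props(1,2)[of "snd z v"] phf_props(3) by auto
  qed
  show "continuous_map (subtopology Z {z. 1/9 \<le> snd z v \<and> snd z v \<le> 1/3}) X
          (\<lambda>z. lin U (phf (snd z v)) (k (fst z * psf (snd z v), yv (snd z))) ev)"
  proof (rule region_k_cont[OF cphf[OF sub_s]])
    show "\<And>z. z \<in> topspace Z \<Longrightarrow> z \<in> {z. 1/9 \<le> snd z v \<and> snd z v \<le> 1/3} \<Longrightarrow> 0 \<le> phf (snd z v) \<and> phf (snd z v) \<le> 1"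
      using s_range phf_props(1,2) by blast
    show "continuous_map (subtopology Z {z. 1/9 \<le> snd z v \<and> snd z v \<le> 1/3}) L
           (\<lambda>z. k (fst z * psf (snd z v), yv (snd z)))"
    proof (rule yvk_cont)
      show "continuous_map (subtopology Z {z. 1/9 \<le> snd z v \<and> snd z v \<le> 1/3}) euclideanreal (\<lambda>z. fst z * psf (snd z v))"
        by (intro continuous_intros sub_t cpsf sub_s)
      show "\<And>z. z \<in> topspace Z \<Longrightarrow> z \<in> {z. 1/9 \<le> snd z v \<and> snd z v \<le> 1/3} \<Longrightarrow> 0 \<le> fst z * psf (snd z v) \<and> fst z * psf (snd z v) \<le> 1"
      proof -
        fix z assume "z \<in> topspace Z"
        then have "0 \<le> fst z" "fst z \<le> 1" by auto
        then show "0 \<le> fst z * psf (snd z v) \<and> fst z * psf (snd z v) \<le> 1"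
          using psf_props(1,2)[of "snd z v"] by (simp add: mult_le_one)
      qed
    next
      show "\<And>z. z \<in> topspace Z \<Longrightarrow> z \<in> {z. 1/9 \<le> snd z v \<and> snd z v \<le> 1/3} \<Longrightarrow> 1/9 \<le> snd z v \<and> snd z v \<le> 1/3"
        by simp
    qed
  qed
  show "continuous_map (subtopology Z {z. 1/3 \<le> snd z v}) X (\<lambda>z. ev)"
    using ev_in by simp
  show "lin U (phf (snd z v)) (yv (snd z)) ev = lin U (phf (snd z v)) (k (fst z * psf (snd z v), yv (snd z))) ev"
    if "z \<in> topspace Z" "snd z v = 1/9" for z
  proof -
    have "yv (snd z) \<in> Rset U W0 E" using that by (intro yv_L) auto
    then show ?thesis using that k0 psf_props(3)[of "snd z v"] by simp
  qed
  show "lin U (phf (snd z v)) (k (fst z * psf (snd z v), yv (snd z))) ev = ev"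
    if "z \<in> topspace Z" "snd z v = 1/3" for z
    using that phf_props(4)[of "snd z v"] lin1[OF ev_ext] by simp
qed


definition HB2 :: "real \<times> ('a \<Rightarrow> real) \<Rightarrow> ('a \<Rightarrow> real)" where
  "HB2 z = (if snd z v \<le> 1/9 then lin U ((1 - fst z) * phf (snd z v)) (yv (snd z)) ev
            else if snd z v \<le> 2/9 then lin U ((1 - fst z) * phf (snd z v)) (k (psf (snd z v), yv (snd z))) ev
            else lin U ((1 - fst z) * phf (snd z v)) p ev)"

lemma a2_range: "z \<in> topspace Z \<Longrightarrow> 0 \<le> (1 - fst z) * phf (snd z v) \<and> (1 - fst z) * phf (snd z v) \<le> 1"
proof -
  assume z: "z \<in> topspace Z"
  then have t: "0 \<le> fst z" "fst z \<le> 1" by auto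
  have ph: "0 \<le> phf (snd z v)" "phf (snd z v) \<le> 1" using s_range[OF z] phf_props(1,2) by auto
  show ?thesis using t ph by (auto intro: mult_le_one mult_nonneg_nonneg)
qed

lemma ca2: "continuous_map (subtopology Z S) euclideanreal (\<lambda>z. (1 - fst z) * phf (snd z v))"
  by (intro continuous_intros sub_t cphf sub_s)

lemma HB2_cont: "continuous_map Z X HB2"
  unfolding HB2_def
proof (rule paste3[OF cZs])
  show "(1/9::real) \<le> 2/9" by simp
  show "continuous_map (subtopology Z {z. snd z v \<le> 1/9}) X (\<lambda>z. lin U ((1 - fst z) * phf (snd z v)) (yv (snd z)) ev)"
  proof (rule region1_cont[OF ca2])
    fix z assume "z \<in> topspace Z" "snd z v \<le> 1/9"
    then show "0 \<le> (1 - fst z) * phf (snd z v) \<and> (1 - fst z) * phf (snd z v) \<le> 1 \<and> (snd z v = 0 \<longrightarrow> (1 - fst z) * phf (snd z v) = 0)"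
      using a2_range[of z] phf_props(3) by auto
  qed
  show "continuous_map (subtopology Z {z. 1/9 \<le> snd z v \<and> snd z v \<le> 2/9}) X
          (\<lambda>z. lin U ((1 - fst z) * phf (snd z v)) (k (psf (snd z v), yv (snd z))) ev)"
  proof (rule region_k_cont[OF ca2])
    show "\<And>z. z \<in> topspace Z \<Longrightarrow> z \<in> {z. 1/9 \<le> snd z v \<and> snd z v \<le> 2/9} \<Longrightarrow> 0 \<le> (1 - fst z) * phf (snd z v) \<and> (1 - fst z) * phf (snd z v) \<le> 1"
      using a2_range by blast
    show "continuous_map (subtopology Z {z. 1/9 \<le> snd z v \<and> snd z v \<le> 2/9}) L
           (\<lambda>z. k (psf (snd z v), yv (snd z)))"
    proof (rule yvk_cont)
      show "continuous_map (subtopology Z {z. 1/9 \<le> snd z v \<and> snd z v \<le> 2/9}) euclideanreal (\<lambda>z. psf (snd z v))"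
        by (intro cpsf sub_s)
      show "\<And>z. z \<in> topspace Z \<Longrightarrow> z \<in> {z. 1/9 \<le> snd z v \<and> snd z v \<le> 2/9} \<Longrightarrow> 0 \<le> psf (snd z v) \<and> psf (snd z v) \<le> 1"
        using psf_props(1,2) by blast
      show "\<And>z. z \<in> topspace Z \<Longrightarrow> z \<in> {z. 1/9 \<le> snd z v \<and> snd z v \<le> 2/9} \<Longrightarrow> 1/9 \<le> snd z v \<and> snd z v \<le> 1/3"
        by simp
    qed
  qed
  show "continuous_map (subtopology Z {z. 2/9 \<le> snd z v}) X (\<lambda>z. lin U ((1 - fst z) * phf (snd z v)) p ev)"
  proof (rule region_k_cont[OF ca2])
    show "\<And>z. z \<in> topspace Z \<Longrightarrow> z \<in> {z. 2/9 \<le> snd z v} \<Longrightarrow> 0 \<le> (1 - fst z) * phf (snd z v) \<and> (1 - fst z) * phf (snd z v) \<le> 1"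
      using a2_range by blast
    show "continuous_map (subtopology Z {z. 2/9 \<le> snd z v}) L (\<lambda>z. p)"
      using pin by simp
  qed
  show "lin U ((1 - fst z) * phf (snd z v)) (yv (snd z)) ev = lin U ((1 - fst z) * phf (snd z v)) (k (psf (snd z v), yv (snd z))) ev"
    if "z \<in> topspace Z" "snd z v = 1/9" for z
  proof -
    have "yv (snd z) \<in> Rset U W0 E" using that by (intro yv_L) auto
    then show ?thesis using that k0 psf_props(3)[of "snd z v"] by simp
  qed
  show "lin U ((1 - fst z) * phf (snd z v)) (k (psf (snd z v), yv (snd z))) ev = lin U ((1 - fst z) * phf (snd z v)) p ev"
    if "z \<in> topspace Z" "snd z v = 2/9" for z
  proof -
    have "yv (snd z) \<in> Rset U W0 E" using that by (intro yv_L) auto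
    then show ?thesis using that k1 psf_props(4)[of "snd z v"] by simp
  qed
qed

lemma HB1_0: "x \<in> Rset U W E \<Longrightarrow> HB1 (0, x) = PP x"
proof -
  assume x: "x \<in> Rset U W E"
  consider "x v \<le> 1/9" | "1/9 < x v" "x v \<le> 1/3" | "1/3 < x v" by linarith
  then show ?thesis
  proof cases
    case 1 then show ?thesis by (simp add: HB1_def lin_yv_PP)
  next
    case 2
    have "yv x \<in> Rset U W0 E" using 2 x by (intro yv_L) auto
    then show ?thesis using 2 k0 by (simp add: HB1_def lin_yv_PP)
  next
    case 3 then show ?thesis by (simp add: HB1_def PP_big)
  qed
qed

lemma HB2_0: "x \<in> Rset U W E \<Longrightarrow> HB2 (0, x) = HB1 (1, x)"
proof -
  assume x: "x \<in> Rset U W E"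
  consider "x v \<le> 2/9" | "2/9 < x v" "x v \<le> 1/3" | "1/3 < x v" by linarith
  then show ?thesis
  proof cases
    case 1 then show ?thesis by (simp add: HB1_def HB2_def)
  next
    case 2
    have "yv x \<in> Rset U W0 E" using 2 x by (intro yv_L) auto
    then show ?thesis using 2 k1 psf_props(4)[of "x v"] by (simp add: HB1_def HB2_def)
  next
    case 3 then show ?thesis using phf_props(4)[of "x v"] lin1[OF ev_ext] by (simp add: HB1_def HB2_def)
  qed
qed

lemma HB2_1_Y: "x \<in> Rset U W E \<Longrightarrow> HB2 (1, x) \<in> Rset U (W - {v}) E"
proof -
  assume x: "x \<in> Rset U W E"
  have sub: "Rset U W0 E \<subseteq> Rset U (W - {v}) E" by (rule Rset_mono[OF W0_sub])
  consider "x v = 0" | "0 < x v" "x v \<le> 1/9" | "1/9 < x v" "x v \<le> 2/9" | "2/9 < x v"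
    using Rset_le1[OF fin x vU] by linarith
  then show ?thesis
  proof cases
    case 1 then show ?thesis using x yv_0[OF x] lin0[OF Rset_ext[OF x]] x_v0_Y by (simp add: HB2_def)
  next
    case 2
    have yl: "yv x \<in> Rset U W0 E" using 2 x by (intro yv_L) auto
    have "lin U 0 (yv x) ev = yv x" by (rule lin0[OF Rset_ext[OF yl]])
    then show ?thesis using 2 sub yl by (auto simp: HB2_def)
  next
    case 3
    have "yv x \<in> Rset U W0 E" using 3 x by (intro yv_L) auto
    then have "(psf (x v), yv x) \<in> topspace (prod_topology (top_of_set {0..1}) L)"
      using psf_props(1,2)[of "x v"] by auto
    then have kl: "k (psf (x v), yv x) \<in> Rset U W0 E"
      using continuous_map_image_subset_topspace[OF kc] by auto
    have "lin U 0 (k (psf (x v), yv x)) ev = k (psf (x v), yv x)" by (rule lin0[OF Rset_ext[OF kl]])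
    then show ?thesis using 3 sub kl by (auto simp: HB2_def)
  next
    case 4
    have "lin U 0 p ev = p" by (rule lin0[OF Rset_ext[OF pin]])
    then show ?thesis using 4 sub pin by (auto simp: HB2_def)
  qed
qed

lemma HB2_1_id: "y \<in> Rset U (W - {v}) E \<Longrightarrow> HB2 (1, y) = y"
proof -
  assume y: "y \<in> Rset U (W - {v}) E"
  then have y0: "y v = 0" by (rule Y_v0)
  have yW: "y \<in> Rset U W E" using y Rset_mono[of "W - {v}" W] by auto
  show ?thesis using y0 yv_0[OF yW y0] lin0[OF Rset_ext[OF yW]] by (simp add: HB2_def)
qed

theorem cone_equiv: "X homotopy_equivalent_space Y"
  unfolding homotopy_equivalent_space_def
proof (intro exI conjI)
  let ?f = "\<lambda>x. HB2 (1, x)"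
  have cfX: "continuous_map X X ?f"
  proof -
    have "continuous_map X Z (\<lambda>x. (1, x))"
      by (intro continuous_map_pairedI continuous_map_id) auto
    from continuous_map_compose[OF this HB2_cont] show ?thesis by (simp add: o_def)
  qed
  show cf: "continuous_map X Y ?f"
    by (rule Rsp_narrow[OF cfX]) (auto intro: HB2_1_Y)
  show cg: "continuous_map Y X id" by (rule Rsp_incl) auto
  have h1: "homotopic_with (\<lambda>x. True) X X PP (\<lambda>x. HB1 (1, x))"
  proof -
    have "\<forall>x\<in>topspace X. HB1 (0, x) = PP x" using HB1_0 by auto
    then show ?thesis using HB1_cont by (subst homotopic_with) (auto intro!: exI[of _ HB1])
  qed
  have h2: "homotopic_with (\<lambda>x. True) X X (\<lambda>x. HB1 (1, x)) ?f"
  proof -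
    have "\<forall>x\<in>topspace X. HB2 (0, x) = HB1 (1, x)" using HB2_0 by auto
    then show ?thesis using HB2_cont by (subst homotopic_with) (auto intro!: exI[of _ HB2])
  qed
  have "homotopic_with (\<lambda>x. True) X X id ?f"
    by (rule homotopic_with_trans[OF HA_hom homotopic_with_trans[OF h1 h2]])
  then show "homotopic_with (\<lambda>x. True) X X (id \<circ> ?f) id"
    by (simp add: homotopic_with_sym)
  show "homotopic_with (\<lambda>x. True) Y Y (?f \<circ> id) id"
    by (rule homotopic_with_equal) (use continuous_map_compose[OF cg cf] HB2_1_id in auto)
qed

end



lemma cone_contr:
  assumes fin: "finite U" and WU: "W \<subseteq> U" and vW: "v \<in> W" and irr: "\<not> E v v"
    and con: "contractible_space (Rsp U (lk W E v) E)" and ne: "Rset U (lk W E v) E \<noteq> {}"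
  shows "Rsp U W E homotopy_equivalent_space Rsp U (W - {v}) E"
proof -
  let ?L = "Rsp U (lk W E v) E"
  obtain a where "homotopic_with (\<lambda>x. True) ?L ?L id (\<lambda>x. a)"
    using con unfolding contractible_space_def by blast
  then obtain h where hc: "continuous_map (prod_topology (subtopology euclideanreal {0..1}) ?L) ?L h"
    and h0: "\<forall>x\<in>topspace ?L. h (0, x) = id x" and h1: "\<forall>x\<in>topspace ?L. h (1, x) = a"
    by (subst (asm) homotopic_with) auto
  obtain y where y: "y \<in> Rset U (lk W E v) E" using ne by blast
  have "(1::real, y) \<in> topspace (prod_topology (subtopology euclideanreal {0..1}) ?L)" using y by simp
  then have "h (1, y) \<in> Rset U (lk W E v) E"
    using continuous_map_image_subset_topspace[OF hc] by auto
  then have ain: "a \<in> Rset U (lk W E v) E" using h1 y by auto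
  interpret cone U W E v h a
    by (unfold_locales) (use fin WU vW irr hc h0 h1 ain in auto)
  show ?thesis by (rule cone_equiv)
qed

lemma gZt: "continuous_map (prod_topology (top_of_set {0..1::real}) T) euclideanreal fst"
  using continuous_map_fst[of "top_of_set {0..1::real}" T] continuous_map_in_subtopology by blast

lemma gZx: "u \<in> U \<Longrightarrow> continuous_map (prod_topology (top_of_set {0..1::real}) (Rsp U W E)) euclideanreal (\<lambda>z. snd z u)"
  using continuous_map_compose[OF continuous_map_snd cont_coord[of u U W E]] by (simp add: o_def)

lemma cont_lin_Rsp2:
  assumes "continuous_map T euclideanreal a"
    "\<And>u. u \<in> U \<Longrightarrow> continuous_map T euclideanreal (\<lambda>z. f z u)"
    "\<And>u. u \<in> U \<Longrightarrow> continuous_map T euclideanreal (\<lambda>z. g z u)"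
    "\<And>z. z \<in> topspace T \<Longrightarrow> lin U (a z) (f z) (g z) \<in> Rset U W' E"
  shows "continuous_map T (Rsp U W' E) (\<lambda>z. lin U (a z) (f z) (g z))"
  using assms by (intro cont_into_Rsp cont_lin) auto

definition ind :: "'a set \<Rightarrow> 'a \<Rightarrow> 'a \<Rightarrow> real" where
  "ind U z = restrict (\<lambda>u. if u = z then 1 else 0) U"

lemma ind_in:
  assumes "finite U" "W \<subseteq> U" "z \<in> W" "\<not> E z z"
  shows "ind U z \<in> Rset U W E" "supp U (ind U z) = {z}"
proof -
  have zU: "z \<in> U" using assms by auto
  have "sum (ind U z) U = 1" using assms zU by (simp add: ind_def sum.If_cases)
  moreover show "supp U (ind U z) = {z}" using zU by (auto simp: supp_def ind_def)
  ultimately show "ind U z \<in> Rset U W E" using assms by (auto simp: Rset_def pt_def ind_def indep_def)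
qed

lemma iso_contr:
  assumes fin: "finite U" and WU: "W \<subseteq> U" and zW: "z \<in> W" and iso: "\<forall>x\<in>W. \<not> E z x \<and> \<not> E x z"
  shows "contractible_space (Rsp U W E)"
proof -
  let ?X = "Rsp U W E"
  let ?Z = "prod_topology (top_of_set {0..1::real}) ?X"
  let ?h = "\<lambda>z'. lin U (fst z') (snd z') (ind U z)"
  have zin: "ind U z \<in> Rset U W E" and sz: "supp U (ind U z) = {z}"
    using ind_in[OF fin WU zW] iso zW by auto
  have "continuous_map ?Z ?X ?h"
  proof (rule cont_lin_Rsp2[OF gZt])
    show "\<And>u. u \<in> U \<Longrightarrow> continuous_map ?Z euclideanreal (\<lambda>z'. snd z' u)" by (rule gZx)
    show "\<And>u. u \<in> U \<Longrightarrow> continuous_map ?Z euclideanreal (\<lambda>z'. ind U z u)" by simp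
    show "?h z' \<in> Rset U W E" if "z' \<in> topspace ?Z" for z'
    proof -
      obtain t x where z0: "z' = (t, x)" by (cases z')
      then have t: "0 \<le> t" "t \<le> 1" and x: "x \<in> Rset U W E" using that by auto
      have "supp U x \<subseteq> W" "indep E (supp U x)" using x by (auto simp: Rset_def)
      then have "supp U x \<union> supp U (ind U z) \<subseteq> W" "indep E (supp U x \<union> supp U (ind U z))"
        using sz zW iso by (auto simp: indep_def)
      then show ?thesis using z0 t x zin by (auto intro: lin_Rset[OF fin])
    qed
  qed
  moreover have "\<forall>x\<in>topspace ?X. ?h (0, x) = id x" by (auto intro: lin0 Rset_ext)
  moreover have "\<forall>x\<in>topspace ?X. ?h (1, x) = ind U z" by (auto intro: lin1 simp: ind_def)
  ultimately have "homotopic_with (\<lambda>x. True) ?X ?X id (\<lambda>x. ind U z)"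
    by (subst homotopic_with) (auto intro!: exI[of _ ?h])
  then show ?thesis unfolding contractible_space_def by blast
qed

lemma fold:
  assumes fin: "finite U" and WU: "W \<subseteq> U" and uW: "u \<in> W" and wW: "w \<in> W" and uw: "u \<noteq> w"
    and n1: "\<not> E u w" and n2: "\<not> E w u" and iw: "\<not> E w w" and iu: "\<not> E u u"
    and dom: "\<forall>x\<in>W. E u x \<or> E x u \<longrightarrow> E w x \<or> E x w"
  shows "Rsp U W E homotopy_equivalent_space Rsp U (W - {w}) E"
proof (rule cone_contr[of U W w E, OF fin WU wW iw])
  have ul: "u \<in> lk W E w" using uW uw n1 n2 by (auto simp: lk_def)
  have lkU: "lk W E w \<subseteq> U" using WU by (auto simp: lk_def)
  show "contractible_space (Rsp U (lk W E w) E)"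
  proof (rule iso_contr[OF fin lkU ul])
    show "\<forall>x\<in>lk W E w. \<not> E u x \<and> \<not> E x u" using dom by (auto simp: lk_def)
  qed
  show "Rset U (lk W E w) E \<noteq> {}" using ind_in(1)[of U "lk W E w" u E, OF fin lkU ul iu] by blast
qed

lemma Rset_cong_E: "(\<And>x y. x \<in> W \<Longrightarrow> y \<in> W \<Longrightarrow> E x y = E' x y) \<Longrightarrow> Rset U W E = Rset U W E'"
  unfolding Rset_def indep_def by (rule Collect_cong) blast

lemma Rsp_shrink:
  assumes fin: "finite U" and U'U: "U' \<subseteq> U" and WU': "W \<subseteq> U'"
  shows "Rsp U W E homeomorphic_space Rsp U' W E"
proof -
  let ?r = "\<lambda>f. restrict f U'"
  let ?e = "\<lambda>g. restrict (\<lambda>u. if u \<in> U' then g u else 0) U"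
  have fin': "finite U'" using fin U'U finite_subset by auto
  have r_in: "?r f \<in> Rset U' W E" if f: "f \<in> Rset U W E" for f
  proof -
    have sf: "supp U f \<subseteq> W" "indep E (supp U f)" "pt U f" using f by (auto simp: Rset_def)
    have ss: "supp U' (?r f) = supp U f" using sf(1) WU' U'U by (auto simp: supp_def)
    have "sum f U' = sum f U"
    proof (rule sum.mono_neutral_left[OF fin U'U])
      show "\<forall>i\<in>U - U'. f i = 0" using sf(1) WU' by (auto simp: supp_def)
    qed
    then have "sum (?r f) U' = 1" using sf(3) by (simp add: pt_def)
    then show ?thesis using sf ss U'U by (auto simp: Rset_def pt_def)
  qed
  have e_in: "?e g \<in> Rset U W E" if g: "g \<in> Rset U' W E" for g
  proof -
    have sg: "supp U' g \<subseteq> W" "indep E (supp U' g)" "pt U' g" using g by (auto simp: Rset_def)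
    have ss: "supp U (?e g) = supp U' g" using U'U by (auto simp: supp_def)
    have "sum (?e g) U = sum (?e g) U'"
      by (rule sum.mono_neutral_right[OF fin U'U]) auto
    also have "\<dots> = sum g U'" using U'U by (intro sum.cong) auto
    finally have "sum (?e g) U = 1" using sg(3) by (simp add: pt_def)
    then show ?thesis using sg ss by (auto simp: Rset_def pt_def)
  qed
  have "homeomorphic_maps (Rsp U W E) (Rsp U' W E) ?r ?e"
    unfolding homeomorphic_maps_def
  proof (intro conjI ballI)
    show "continuous_map (Rsp U W E) (Rsp U' W E) ?r"
    proof (rule cont_into_Rsp)
      show "continuous_map (Rsp U W E) euclideanreal (\<lambda>z. ?r z u)" if "u \<in> U'" for u
        using that U'U cont_coord[of u U W E] by auto
    qed (use r_in in auto)
    show "continuous_map (Rsp U' W E) (Rsp U W E) ?e"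
    proof (rule cont_into_Rsp)
      show "continuous_map (Rsp U' W E) euclideanreal (\<lambda>z. ?e z u)" if "u \<in> U" for u
        using that cont_coord[of u U' W E] by (cases "u \<in> U'") auto
    qed (use e_in in auto)
    show "?e (?r x) = x" if "x \<in> topspace (Rsp U W E)" for x
    proof -
      have x: "x \<in> Rset U W E" using that by simp
      have "\<forall>u\<in>U - U'. x u = 0" using x WU' by (auto simp: Rset_def supp_def)
      then show ?thesis using Rset_ext[OF x] by (auto simp: fun_eq_iff extensional_def)
    qed
    show "?r (?e y) = y" if "y \<in> topspace (Rsp U' W E)" for y
    proof -
      have y: "y \<in> Rset U' W E" using that by simp
      then show ?thesis using Rset_ext[OF y] U'U by (auto simp: fun_eq_iff extensional_def)
    qed
  qed
  then show ?thesis unfolding homeomorphic_space_def by blast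
qed

lemma delete_equiv:
  assumes fin: "finite (fst H)" and vH: "v \<in> fst H"
  shows "Rsp (fst H) (fst H - {v}) (snd H) homotopy_equivalent_space indep_space (delete_vertex H v)"
proof -
  have "indep_space (delete_vertex H v) = Rsp (fst H - {v}) (fst H - {v}) (\<lambda>x y. x \<noteq> v \<and> y \<noteq> v \<and> snd H x y)"
    by (simp add: indep_space_Rsp delete_vertex_def)
  also have "\<dots> = Rsp (fst H - {v}) (fst H - {v}) (snd H)"
    unfolding Rsp_def by (subst Rset_cong_E[where E'="snd H"]) auto
  finally have eq: "indep_space (delete_vertex H v) = Rsp (fst H - {v}) (fst H - {v}) (snd H)" .
  show ?thesis unfolding eq
    by (rule homeomorphic_imp_homotopy_equivalent_space, rule Rsp_shrink[OF fin]) auto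
qed



definition qv :: "nat \<Rightarrow> nat \<Rightarrow> nat \<Rightarrow> vert" where
  "qv m t j = (if j \<le> 3*m then B t (j+1) else if j = 3*m+1 then A t else C t (6*m+3-j))"

definition EE :: "nat \<Rightarrow> nat \<Rightarrow> vert \<Rightarrow> vert \<Rightarrow> bool" where
  "EE m t x y \<longleftrightarrow> Gedge0 (3*m+2) t x y \<or> Gedge0 (3*m+2) t y x"

lemma snd_G: "snd (G (3*m+2) t) = EE m t"
  by (simp add: G_def EE_def fun_eq_iff)

lemmas EE_def2 = EE_def

lemma EE_sym: "EE m t x y = EE m t y x" by (auto simp: EE_def2)

lemma EE_irr: "\<not> EE m t x x"
  by (cases x) (auto simp: EE_def2 Gedge0_def)

lemma nb_B:
  assumes "t \<ge> 1" "1 \<le> j" "j \<le> 3*m" "EE m t (B t (j+1)) x"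
  shows "x = B t j \<or> x = B t (j+2) \<and> j+1 \<le> 3*m \<or> x = A t \<and> j = 3*m"
  using assms by (cases x) (auto simp: EE_def2 Gedge0_def)

lemma nb_C:
  assumes "t \<ge> 1" "1 \<le> j" "j \<le> 3*m" "EE m t (C t (j+1)) x"
  shows "x = C t j \<or> x = C t (j+2) \<and> j+1 \<le> 3*m \<or> x = A t \<and> j = 3*m"
  using assms by (cases x) (auto simp: EE_def2 Gedge0_def)

lemma nb_A:
  assumes "EE m t (A a) x"
  shows "x = B a (3*m+1) \<or> x = C a (3*m+1) \<or> x = B (a+1) 1 \<or> x = C (a+1) 1"
  using assms by (cases x) (auto simp: EE_def2 Gedge0_def)

lemma adj_B: "t \<ge> 1 \<Longrightarrow> 1 \<le> j \<Longrightarrow> j \<le> 3*m \<Longrightarrow> EE m t (B t j) (B t (j+1))"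
  unfolding EE_def2 Gedge0_def by (rule disjI1, rule disjI1) (rule exI[of _ t], rule exI[of _ j], simp)

lemma adj_C: "t \<ge> 1 \<Longrightarrow> 1 \<le> j \<Longrightarrow> j \<le> 3*m \<Longrightarrow> EE m t (C t j) (C t (j+1))"
  unfolding EE_def2 Gedge0_def by (rule disjI1, rule disjI1) (rule exI[of _ t], rule exI[of _ j], simp)

lemma adj_AB: "t \<ge> 1 \<Longrightarrow> EE m t (A t) (B t (3*m+1))"
  unfolding EE_def2 Gedge0_def by (rule disjI1, rule disjI2, rule disjI2) (rule exI[of _ t], simp)

lemma adj_AC: "t \<ge> 1 \<Longrightarrow> EE m t (A t) (C t (3*m+1))"
  unfolding EE_def2 Gedge0_def by (rule disjI1, rule disjI2, rule disjI2) (rule exI[of _ t], simp)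

lemma adj_AB1: "t \<ge> 1 \<Longrightarrow> EE m t (A (t-1)) (B t 1)"
  unfolding EE_def2 Gedge0_def by (rule disjI1, rule disjI2, rule disjI2) (rule exI[of _ t], simp)

lemma adj_AC1: "t \<ge> 1 \<Longrightarrow> EE m t (A (t-1)) (C t 1)"
  unfolding EE_def2 Gedge0_def by (rule disjI1, rule disjI2, rule disjI2) (rule exI[of _ t], simp)

lemma adj_q:
  assumes t: "t \<ge> 1" and j: "1 \<le> j" "j \<le> 6*m"
  shows "EE m t (qv m t j) (qv m t (j+1))"
proof -
  consider "j < 3*m" | "j = 3*m" | "j = 3*m+1" | "3*m+1 < j" by linarith
  then show ?thesis
  proof cases
    case 1 then show ?thesis using adj_B[OF t, of "j+1" m] by (simp add: qv_def)
  next
    case 2 then show ?thesis using adj_AB[OF t, of m] j by (simp add: qv_def EE_sym)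
  next
    case 3 then show ?thesis using adj_AC[OF t, of m] by (simp add: qv_def)
  next
    case 4
    have "EE m t (C t (6*m+2-j)) (C t (6*m+2-j+1))" using 4 j by (intro adj_C[OF t]) auto
    moreover have "6*m+2-j+1 = 6*m+3-j" using 4 j by auto
    ultimately show ?thesis using 4 by (simp add: qv_def EE_sym)
  qed
qed

lemma nb_q:
  assumes t: "t \<ge> 1" and j: "1 \<le> j" "j \<le> 6*m+1" and e: "EE m t (qv m t j) x"
  shows "(2 \<le> j \<and> x = qv m t (j-1)) \<or> (j \<le> 6*m \<and> x = qv m t (j+1)) \<or> x = B t 1 \<or> x = C t 1"
proof -
  consider "j \<le> 3*m" | "j = 3*m+1" | "3*m+1 < j" by linarith
  then show ?thesis
  proof cases
    case 1
    then have "EE m t (B t (j+1)) x" using e by (simp add: qv_def)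
    from nb_B[OF t j(1) 1 this] show ?thesis
    proof (elim disjE conjE)
      assume "x = B t j"
      then show ?thesis using 1 j by (cases "j = 1") (auto simp: qv_def)
    next
      assume "x = B t (j+2)" "j+1 \<le> 3*m"
      then show ?thesis using 1 by (auto simp: qv_def)
    next
      assume "x = A t" "j = 3*m"
      then show ?thesis by (auto simp: qv_def)
    qed
  next
    case 2
    then have "EE m t (A t) x" using e by (simp add: qv_def)
    from nb_A[OF this] show ?thesis
    proof (elim disjE)
      assume "x = B t (3*m+1)"
      then show ?thesis using 2 by (cases "m = 0") (auto simp: qv_def)
    next
      assume "x = C t (3*m+1)"
      then show ?thesis using 2 by (cases "m = 0") (auto simp: qv_def)
    next
      assume "x = B (t+1) 1"
      then have False using e 2 by (auto simp: qv_def EE_def2 Gedge0_def)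
      then show ?thesis ..
    next
      assume "x = C (t+1) 1"
      then have False using e 2 by (auto simp: qv_def EE_def2 Gedge0_def)
      then show ?thesis ..
    qed
  next
    case 3
    define c where "c = 6*m+2-j"
    have c: "1 \<le> c" "c \<le> 3*m" "6*m+3-j = c+1" using 3 j by (auto simp: c_def)
    then have "EE m t (C t (c+1)) x" using e 3 by (simp add: qv_def)
    from nb_C[OF t c(1,2) this] show ?thesis
    proof (elim disjE conjE)
      assume "x = C t c"
      then show ?thesis using 3 j c by (cases "c = 1") (auto simp: qv_def c_def)
    next
      assume "x = C t (c+2)" "c+1 \<le> 3*m"
      then show ?thesis using 3 j c by (auto simp: qv_def c_def)
    next
      assume "x = A t" "c = 3*m"
      then show ?thesis using 3 j c by (auto simp: qv_def c_def)
    qed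
  qed
qed

lemma qv_inj: "1 \<le> i \<Longrightarrow> i \<le> 6*m+1 \<Longrightarrow> 1 \<le> j \<Longrightarrow> j \<le> 6*m+1 \<Longrightarrow> qv m t i = qv m t j \<Longrightarrow> i = j"
  by (auto simp: qv_def split: if_splits)

lemma qv_not1: "1 \<le> j \<Longrightarrow> j \<le> 6*m+1 \<Longrightarrow> qv m t j \<noteq> B t 1 \<and> qv m t j \<noteq> C t 1"
  by (auto simp: qv_def split: if_splits)

lemma qv_V: "t \<ge> 1 \<Longrightarrow> 1 \<le> j \<Longrightarrow> j \<le> 6*m+1 \<Longrightarrow> qv m t j \<in> Gverts (3*m+2) t"
  by (auto simp: qv_def Gverts_def)

abbreviation "VV m t \<equiv> Gverts (3*m+2) t"
abbreviation "LK m t \<equiv> lk (VV m t) (EE m t) (A (t-1))"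

lemma qv_lk:
  assumes t: "t \<ge> 1" and j: "1 \<le> j" "j \<le> 6*m+1"
  shows "qv m t j \<in> LK m t"
proof -
  have ne: "qv m t j \<noteq> A (t-1)" using t by (auto simp: qv_def)
  have "\<not> EE m t (A (t-1)) (qv m t j)"
  proof
    assume "EE m t (A (t-1)) (qv m t j)"
    from nb_A[OF this] show False using qv_not1[OF j, of t] t by (auto simp: qv_def split: if_splits)
  qed
  then show ?thesis using qv_V[OF t j] ne EE_sym[of m t] by (auto simp: lk_def)
qed

lemma B1_notlk: "t \<ge> 1 \<Longrightarrow> B t 1 \<notin> LK m t"
  using adj_AB1[of t m] by (auto simp: lk_def)

lemma C1_notlk: "t \<ge> 1 \<Longrightarrow> C t 1 \<notin> LK m t"
  using adj_AC1[of t m] by (auto simp: lk_def)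

lemma fin_V: "finite (Gverts n t)"
proof -
  have "Gverts n t \<subseteq> A ` {..t} \<union> (\<lambda>(i,j). B i j) ` ({..t} \<times> {..n}) \<union> (\<lambda>(i,j). C i j) ` ({..t} \<times> {..n})"
    by (auto simp: Gverts_def image_iff)
  then show ?thesis by (rule finite_subset) auto
qed

definition Wk :: "nat \<Rightarrow> nat \<Rightarrow> nat \<Rightarrow> vert set" where
  "Wk m t k = {x \<in> LK m t. \<forall>i. 1 \<le> i \<and> i \<le> k \<longrightarrow> x \<noteq> qv m t (3*i)}"

lemma Wk_sub: "Wk m t k \<subseteq> VV m t" by (auto simp: Wk_def lk_def)

lemma Wk_contr:
  assumes t: "t \<ge> 1"
  shows "k \<le> 2*m \<Longrightarrow> contractible_space (Rsp (VV m t) (Wk m t k) (EE m t))"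
proof (induction "2*m - k" arbitrary: k)
  case 0
  then have k: "k = 2*m" by auto
  let ?z = "qv m t (6*m+1)"
  show ?case
  proof (rule iso_contr[OF fin_V Wk_sub])
    have "?z \<noteq> qv m t (3*i)" if "1 \<le> i" "i \<le> k" for i
    proof
      assume "?z = qv m t (3*i)"
      then have "6*m+1 = 3*i" using that k by (intro qv_inj[of "6*m+1" m "3*i" t]) auto
      then show False by presburger
    qed
    then show zW: "?z \<in> Wk m t k"
      using qv_lk[OF t, of "6*m+1" m] unfolding Wk_def by auto
    show "\<forall>x\<in>Wk m t k. \<not> EE m t ?z x \<and> \<not> EE m t x ?z"
    proof (intro ballI conjI)
      fix x assume x: "x \<in> Wk m t k"
      show nz: "\<not> EE m t ?z x"
      proof
        assume e: "EE m t ?z x"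
        from nb_q[OF t _ _ e] have
          "(2 \<le> 6*m+1 \<and> x = qv m t (6*m)) \<or> x = B t 1 \<or> x = C t 1" by auto
        then show False
        proof (elim disjE conjE)
          assume "2 \<le> 6*m+1" "x = qv m t (6*m)"
          then have "1 \<le> 2*m" "qv m t (6*m) = qv m t (3*(2*m))" by auto
          then show False using x k \<open>x = qv m t (6*m)\<close> unfolding Wk_def by blast
        qed (use x B1_notlk[OF t] C1_notlk[OF t] in \<open>auto simp: Wk_def\<close>)
      qed
      then show "\<not> EE m t x ?z" using EE_sym by metis
    qed
  qed
next
  case (Suc d)
  then have k: "k < 2*m" "d = 2*m - (k+1)" by auto
  have IH: "contractible_space (Rsp (VV m t) (Wk m t (k+1)) (EE m t))"
    using Suc.hyps(1)[OF k(2)] k by auto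
  let ?u = "qv m t (3*k+1)" and ?w = "qv m t (3*k+3)"
  have eq: "Wk m t k - {?w} = Wk m t (k+1)"
  proof -
    have "qv m t (3*(k+1)) = ?w" by (simp add: algebra_simps)
    then show ?thesis unfolding Wk_def by (auto simp: le_Suc_eq)
  qed
  have "?u \<noteq> qv m t (3*i)" if "1 \<le> i" "i \<le> k" for i
  proof
    assume "?u = qv m t (3*i)"
    then have "3*k+1 = 3*i" using that k by (intro qv_inj[of "3*k+1" m "3*i" t]) auto
    then show False by presburger
  qed
  then have uW: "?u \<in> Wk m t k"
    using qv_lk[OF t, of "3*k+1" m] k unfolding Wk_def by auto
  have "?w \<noteq> qv m t (3*i)" if "1 \<le> i" "i \<le> k" for i
  proof
    assume "?w = qv m t (3*i)"
    then have "3*k+3 = 3*i" using that k by (intro qv_inj[of "3*k+3" m "3*i" t]) auto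
    then show False using that by presburger
  qed
  then have wW: "?w \<in> Wk m t k"
    using qv_lk[OF t, of "3*k+3" m] k unfolding Wk_def by auto
  have uw: "?u \<noteq> ?w" using qv_inj[of "3*k+1" m "3*k+3" t] k by auto
  have nuw: "\<not> EE m t ?u ?w"
  proof
    assume e: "EE m t ?u ?w"
    from nb_q[OF t _ _ e] k have "(2 \<le> 3*k+1 \<and> ?w = qv m t (3*k)) \<or> ?w = qv m t (3*k+2) \<or> ?w = B t 1 \<or> ?w = C t 1"
      by auto
    then show False
    proof (elim disjE conjE)
      assume "2 \<le> 3*k+1" "?w = qv m t (3*k)"
      then have "3*k+3 = 3*k" using k by (intro qv_inj[of "3*k+3" m "3*k" t]) auto
      then show False by simp
    next
      assume "?w = qv m t (3*k+2)"
      then have "3*k+3 = 3*k+2" using k by (intro qv_inj[of "3*k+3" m "3*k+2" t]) auto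
      then show False by simp
    qed (use qv_not1[of "3*k+3" m t] k in auto)
  qed
  have dom: "\<forall>x\<in>Wk m t k. EE m t ?u x \<or> EE m t x ?u \<longrightarrow> EE m t ?w x \<or> EE m t x ?w"
  proof (intro ballI impI)
    fix x assume x: "x \<in> Wk m t k" and "EE m t ?u x \<or> EE m t x ?u"
    then have e: "EE m t ?u x" using EE_sym by metis
    from nb_q[OF t _ _ e] k have "(2 \<le> 3*k+1 \<and> x = qv m t (3*k)) \<or> x = qv m t (3*k+2) \<or> x = B t 1 \<or> x = C t 1"
      by auto
    then have "x = qv m t (3*k+2)"
    proof (elim disjE conjE)
      assume a: "2 \<le> 3*k+1" "x = qv m t (3*k)"
      then have "1 \<le> k" by auto
      then show ?thesis using x a unfolding Wk_def by auto
    qed (use x B1_notlk[OF t] C1_notlk[OF t] in \<open>auto simp: Wk_def\<close>)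
    moreover have "EE m t (qv m t (3*k+2)) (qv m t (3*k+2+1))" using k by (intro adj_q[OF t]) auto
    ultimately show "EE m t ?w x \<or> EE m t x ?w" by (simp add: numeral_3_eq_3)
  qed
  have "Rsp (VV m t) (Wk m t k) (EE m t) homotopy_equivalent_space Rsp (VV m t) (Wk m t k - {?w}) (EE m t)"
  proof (rule fold[of "VV m t" "Wk m t k" ?u ?w "EE m t", OF fin_V Wk_sub uW wW uw nuw])
    show "\<not> EE m t ?w ?u" using nuw EE_sym by metis
    show "\<not> EE m t ?w ?w" "\<not> EE m t ?u ?u" by (rule EE_irr)+
  qed (rule dom)
  then show ?case using IH eq homotopy_equivalent_space_contractibility by metis
qed

theorem main_equiv:
  fixes m t :: nat
  assumes t: "t \<ge> 1"
  shows "indep_space (G (3*m+2) t) homotopy_equivalent_space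
           indep_space (delete_vertex (G (3*m+2) t) (A (t-1)))"
proof -
  have fG: "fst (G (3*m+2) t) = VV m t" by (simp add: G_def)
  have vV: "A (t-1) \<in> VV m t" by (auto simp: Gverts_def)
  have W0: "Wk m t 0 = LK m t" by (simp add: Wk_def)
  have c: "contractible_space (Rsp (VV m t) (LK m t) (EE m t))"
    using Wk_contr[OF t, of 0 m] W0 by simp
  have lkV: "LK m t \<subseteq> VV m t" by (auto simp: lk_def)
  have ne: "Rset (VV m t) (LK m t) (EE m t) \<noteq> {}"
    using ind_in(1)[of "VV m t" "LK m t" "qv m t 1" "EE m t", OF fin_V lkV qv_lk[OF t] EE_irr] by auto
  have 1: "Rsp (VV m t) (VV m t) (EE m t) homotopy_equivalent_space Rsp (VV m t) (VV m t - {A (t-1)}) (EE m t)"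
    by (rule cone_contr[of "VV m t" "VV m t" "A (t-1)" "EE m t", OF fin_V _ vV EE_irr c ne]) auto
  have 2: "Rsp (VV m t) (VV m t - {A (t-1)}) (EE m t) homotopy_equivalent_space indep_space (delete_vertex (G (3*m+2) t) (A (t-1)))"
    using delete_equiv[of "G (3*m+2) t" "A (t-1)", unfolded fG snd_G] fin_V vV by blast
  have "indep_space (G (3*m+2) t) = Rsp (VV m t) (VV m t) (EE m t)"
    by (simp only: indep_space_Rsp fG snd_G)
  then show ?thesis using homotopy_eqv_trans[OF 1 2] by simp
qed


theorem lemma3p4:
  fixes m t :: nat
  assumes "t \<ge> 1"
  shows "indep_space (G (3*m+2) t) homotopy_equivalent_space
           indep_space (delete_vertex (G (3*m+2) t) (A (t-1)))"
  using main_equiv[OF assms] .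

end
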